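(* For all integers $n\geq0$, \[ \sum_{j=0}^n\binom{2(n-j)}{n-j}C_jO_{n-j}=\frac12\binom{2(n+1)}{n+1}O_{n+1}-\frac{4^n}{n+1}. \]
   Context: $O_n=\sum_{j=1}^n\frac1{2j-1}$ ($O_0=0$), and $C_n=\frac1{n+1}\binom{2n}{n}$ is the $n$th Catalan number. *)

theory Defs
  imports Complex_Main
begin

definition oddharm :: "nat \<Rightarrow> real" where
  "oddharm n = (\<Sum>j=1..n. 1 / (2 * real j - 1))"

definition catalan :: "nat \<Rightarrow> real" where
  "catalan n = real ((2*n) choose n) / (real n + 1)"

end

theory Submission
  imports Defs "HOL-Computational_Algebra.Formal_Power_Series"
begin

definition cb :: "nat \<Rightarrow> real" where "cb n = real ((2*n) choose n)"

lemma cb_rec: "real (n+1) * cb (Suc n) = 2*(2*real n+1) * cb n"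
proof -
  have e1: "cb (Suc n) = fact (Suc (Suc (2*n))) / (fact (Suc n) * fact (Suc n))"
  proof -
    have "2 * Suc n = Suc (Suc (2*n))" "Suc (Suc (2*n)) - Suc n = Suc n" by simp_all
    then show ?thesis unfolding cb_def using binomial_fact[of "Suc n" "Suc (Suc (2*n))", where 'a=real]
      by (metis le_add2 plus_1_eq_Suc add_Suc_right mult_2)
  qed
  have e2: "cb n = fact (2*n) / (fact n * fact n)"
  proof -
    have "2*n - n = n" by simp
    then show ?thesis unfolding cb_def using binomial_fact[of n "2*n", where 'a=real] by simp
  qed
  have f1: "(fact (Suc (Suc (2*n)))::real) = (2*real n+2)*(2*real n+1)*fact (2*n)"
    unfolding fact_Suc by (simp add: algebra_simps)
  have f2: "(fact (Suc n)::real) = (real n+1)*fact n" unfolding fact_Suc by (simp add: algebra_simps)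
  have g: "(x+1) * ((2*x+2)*(2*x+1)*F / (((x+1)*f)*((x+1)*f))) = 2*(2*x+1)*(F/(f*f))"
    if "x \<ge> 0" "f \<noteq> 0" for x F f :: real
  proof -
    have h: "x+1 \<noteq> 0" using that by simp
    have "(2*x+2)*(2*x+1)*F / (((x+1)*f)*((x+1)*f)) = (2*(2*x+1)*(F/(f*f))) / (x+1)"
      using h that by (simp add: divide_simps) (simp add: algebra_simps)
    then show ?thesis using h by simp
  qed
  show ?thesis unfolding e1 e2 f1 f2 of_nat_add of_nat_1 by (rule g) simp_all
qed

lemma oddharm_Suc: "oddharm (Suc m) = oddharm m + 1/(2*real m+1)"
  unfolding oddharm_def by (simp add: algebra_simps)

definition aa :: "nat \<Rightarrow> real" where "aa n = (if n=0 then 1 else -2*catalan(n-1))"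

abbreviation Q :: "real fps" where "Q \<equiv> 1 - fps_const 4 * fps_X"

lemma Qnth: "fps_nth (Q * fps_deriv P) n = real (n+1) * fps_nth P (n+1) - 4*real n * fps_nth P n"
proof -
  have "(Q * fps_deriv P) = fps_deriv P - fps_const 4 * (fps_X * fps_deriv P)"
    by (simp add: algebra_simps)
  then show ?thesis by (cases n) (auto simp: algebra_simps)
qed

lemma cat_rec: "(real m + 2) * catalan (Suc m) = 2*(2*real m+1)*catalan m"
proof -
  have r: "real (m+1) * cb (Suc m) = 2*(2*real m+1) * cb m" by (rule cb_rec)
  have "(real m + 2) * catalan (Suc m) = cb (Suc m)"
    unfolding catalan_def cb_def by (simp add: field_simps)
  also have "\<dots> = 2*(2*real m+1) * cb m / (real m + 1)" using r by (simp add: field_simps)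
  also have "\<dots> = 2*(2*real m+1)*catalan m" unfolding catalan_def cb_def by simp
  finally show ?thesis .
qed

lemma hA: "Q * fps_deriv (Abs_fps aa) = fps_const (-2) * Abs_fps aa"
proof (rule fps_ext)
  fix n
  show "fps_nth (Q * fps_deriv (Abs_fps aa)) n = fps_nth (fps_const (-2) * Abs_fps aa) n"
  proof (cases n)
    case 0 then show ?thesis by (simp add: Qnth aa_def catalan_def)
  next
    case (Suc m)
    have c: "(real m + 2) * catalan (Suc m) = 2*(2*real m+1)*catalan m" by (rule cat_rec)
    have "real (Suc m + 1) * aa (Suc m + 1) - 4 * real (Suc m) * aa (Suc m) = -2 * aa (Suc m)"
      unfolding aa_def using c by (simp add: algebra_simps)
    then show ?thesis unfolding Qnth using Suc by simp
  qed
qed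

lemma hB: "Q * fps_deriv (Abs_fps cb) = fps_const 2 * Abs_fps cb"
proof (rule fps_ext)
  fix n
  have "real (n+1) * cb (Suc n) = 2*(2*real n+1) * cb n" by (rule cb_rec)
  then show "fps_nth (Q * fps_deriv (Abs_fps cb)) (n) = fps_nth (fps_const 2 * Abs_fps cb) (n)"
    unfolding Qnth by (simp add: algebra_simps)
qed

lemma hF: "Q * fps_deriv (Abs_fps (\<lambda>m. cb m * oddharm m))
   = fps_const 2 * Abs_fps (\<lambda>m. cb m * oddharm m) + fps_const 2 * Abs_fps cb"
proof (rule fps_ext)
  fix n
  have r: "real (n+1) * cb (Suc n) = 2*(2*real n+1) * cb n" by (rule cb_rec)
  have "real (n+1) * (cb (Suc n) * oddharm (Suc n))
      = 2*(2*real n+1) * cb n * oddharm n + 2 * cb n"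
  proof -
    have "real (n+1) * (cb (Suc n) * oddharm (Suc n))
       = (real (n+1) * cb (Suc n)) * (oddharm n + 1/(2*real n+1))"
      by (simp add: oddharm_Suc)
    also have "\<dots> = 2*(2*real n+1) * cb n * (oddharm n + 1/(2*real n+1))" using r by simp
    also have "\<dots> = 2*(2*real n+1) * cb n * oddharm n + 2 * cb n"
      by (simp add: field_simps)
    finally show ?thesis .
  qed
  then show "fps_nth (Q * fps_deriv (Abs_fps (\<lambda>m. cb m * oddharm m))) (n) =
    fps_nth (fps_const 2 * Abs_fps (\<lambda>m. cb m * oddharm m) + fps_const 2 * Abs_fps cb) (n)"
    unfolding Qnth by (simp add: algebra_simps)
qed

lemma t1: "(Q::real fps) * fps_deriv (A * B) = (Q * fps_deriv A) * B + A * (Q * fps_deriv B)"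
  by (simp only: fps_deriv_mult distrib_left mult.assoc mult.commute[of Q] mult.left_commute[of Q] add.commute)
lemma z: "fps_const (- 2) * (X::real fps) + fps_const 2 * X = 0"
proof -
  have "fps_const (- 2) * (X::real fps) + fps_const 2 * X = (fps_const (- 2) + fps_const 2) * X"
    by (simp only: distrib_right)
  also have "\<dots> = 0" by (simp only: fps_const_add) simp
  finally show ?thesis .
qed
lemma t2: "fps_const (-2) * (A::real fps) * B + A * (fps_const 2 * B) = 0"
  by (simp only: mult.assoc mult.left_commute[of A]) (rule z)
lemma t3: "fps_const (-2) * (A::real fps) * F + A * (fps_const 2 * F + fps_const 2 * B) = fps_const 2 * (A * B)"
  by (simp only: distrib_left mult.assoc mult.left_commute[of A] add.assoc[symmetric]) (simp add: z)

lemma AB: "Abs_fps aa * Abs_fps cb = 1"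
proof -
  let ?A = "Abs_fps aa" and ?B = "Abs_fps cb"
  have "Q * fps_deriv (?A * ?B) = (Q * fps_deriv ?A) * ?B + ?A * (Q * fps_deriv ?B)"
    by (rule t1)
  also have "\<dots> = 0" unfolding hA hB by (rule t2)
  finally have z: "Q * fps_deriv (?A * ?B) = 0" .
  have "Q \<noteq> 0"
  proof
    assume "Q = 0" then have "fps_nth Q 0 = 0" by simp
    then show False by simp
  qed
  with z have "fps_deriv (?A * ?B) = 0" by simp
  then have e: "?A * ?B = fps_const (fps_nth (?A * ?B) 0)" by (simp only: fps_deriv_eq_0_iff)
  have "fps_nth (?A * ?B) 0 = 1" by (simp add: aa_def cb_def fps_mult_nth)
  with e show ?thesis by simp
qed

lemma hG: "Q * fps_deriv (Abs_fps aa * Abs_fps (\<lambda>m. cb m * oddharm m)) = fps_const 2"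
proof -
  let ?A = "Abs_fps aa" and ?B = "Abs_fps cb" and ?F = "Abs_fps (\<lambda>m. cb m * oddharm m)"
  have "Q * fps_deriv (?A * ?F) = (Q * fps_deriv ?A) * ?F + ?A * (Q * fps_deriv ?F)"
    by (rule t1)
  also have "\<dots> = fps_const 2 * (?A * ?B)" unfolding hA hF by (rule t3)
  also have "\<dots> = fps_const 2" by (simp add: AB)
  finally show ?thesis .
qed

lemma gval: "fps_nth (Abs_fps aa * Abs_fps (\<lambda>m. cb m * oddharm m)) (Suc n) = 4^Suc n / (2 * real (Suc n))"
proof (induction n)
  case 0
  have "fps_nth (Q * fps_deriv (Abs_fps aa * Abs_fps (\<lambda>m. cb m * oddharm m))) (0) = 2"
    by (subst hG) simp
  then show ?case unfolding Qnth by (simp add: aa_def cb_def oddharm_def)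
next
  case (Suc n)
  have "fps_nth (Q * fps_deriv (Abs_fps aa * Abs_fps (\<lambda>m. cb m * oddharm m))) (Suc n) = 0"
    by (subst hG) simp
  then have "real (Suc n+1) * fps_nth (Abs_fps aa * Abs_fps (\<lambda>m. cb m * oddharm m)) (Suc (Suc n))
     = 4 * real (Suc n) * (4^Suc n / (2 * real (Suc n)))"
    unfolding Qnth using Suc.IH by simp
  moreover have d: "(4 + 4*real n) * (4*(4::real)^n) / (2 + 2*real n) = 8*4^n"
  proof -
    have h: "(2+2*real n) \<noteq> 0" by (simp add: add_pos_nonneg)
    have "(4 + 4*real n) * (4*(4::real)^n) = (8*4^n) * (2+2*real n)" by (simp add: algebra_simps)
    then show ?thesis using h by (metis nonzero_mult_div_cancel_right)
  qed
  ultimately have "(real n + 2) * fps_nth (Abs_fps aa * Abs_fps (\<lambda>m. cb m * oddharm m)) (Suc (Suc n))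
     = 2 * 4^Suc n" by (simp add: add.commute)
  then have "fps_nth (Abs_fps aa * Abs_fps (\<lambda>m. cb m * oddharm m)) (Suc (Suc n))
     = 2 * 4^Suc n / (real n + 2)" by (simp add: eq_divide_eq mult.commute)
  moreover have e: "16 * (4::real)^n / (4 + 2*real n) = 8*4^n/(real n+2)"
  proof -
    have "16 * (4::real)^n / (4 + 2*real n) = (2*(8*4^n))/(2*(real n+2))"
      by (rule arg_cong2[where f="(/)"]) (simp_all add: algebra_simps)
    also have "\<dots> = 8*4^n/(real n+2)" by (rule mult_divide_mult_cancel_left) simp
    finally show ?thesis .
  qed
  ultimately show ?case by simp
qed

theorem corollary3:
  fixes n :: nat
  shows "(\<Sum>j=0..n. real ((2*(n-j)) choose (n-j)) * catalan j * oddharm (n-j))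
         = (1/2) * real ((2*(n+1)) choose (n+1)) * oddharm (n+1) - 4^n / (real n + 1)"
proof -
  have "fps_nth (Abs_fps aa * Abs_fps (\<lambda>m. cb m * oddharm m)) (Suc n)
     = (\<Sum>i=0..Suc n. aa i * (cb (Suc n - i) * oddharm (Suc n - i)))"
    by (simp add: fps_mult_nth)
  also have "\<dots> = (\<Sum>i=0..n. aa (Suc i) * (cb (n - i) * oddharm (n - i)))
      + cb (Suc n) * oddharm (Suc n)"
    by (subst sum.atLeast0_atMost_Suc_shift) (simp add: aa_def)
  also have "(\<Sum>i=0..n. aa (Suc i) * (cb (n - i) * oddharm (n - i)))
     = -2 * (\<Sum>j=0..n. real ((2*(n-j)) choose (n-j)) * catalan j * oddharm (n-j))"
    by (simp add: sum_distrib_left aa_def cb_def algebra_simps)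
  finally have "-2 * (\<Sum>j=0..n. real ((2*(n-j)) choose (n-j)) * catalan j * oddharm (n-j))
      + cb (Suc n) * oddharm (Suc n) = 4^Suc n / (2 * real (Suc n))"
    using gval by simp
  then show ?thesis by (simp add: cb_def field_simps)
qed

end
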